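(* Let $\lambda=(\lambda_1\ge\cdots\ge\lambda_n)$ be a partition with positive parts, $m=\lambda_1$, and let $\mathbf T_\lambda=\{(i,j):1\le i\le n,\ 1\le j\le\lambda_i\}$. Let $I_2(\mathbf T_\lambda)\subset K[\mathbf T_\lambda]$ be the ideal generated by the 2-minors of $\mathbf T_\lambda$, and let $L\subset K[\mathbf T_\lambda]$ be the ideal generated by the diagonal sums $$\sum_{i\ge1,\ (i,k+i)\in\mathbf T_\lambda}T_{i,k+i}\ (k=0,\dots,m-1),\qquad\sum_{i\ge1,\ (k+i,i)\in\mathbf T_\lambda}T_{k+i,i}\ (k=1,\dots,n-1).$$ Let $\prec$ be the reverse-lexicographic term order induced by $T_{1,1}>T_{1,2}>\cdots>T_{1,\lambda_1}>T_{2,1}>\cdots>T_{2,\lambda_2}>\cdots>T_{n,\lambda_n}$. Then $T_{ij}^j\in\mathrm{in}_\prec(I_2(\mathbf T_\lambda)+L)$ for every $(i,j)\in\mathbf T_\lambda$.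
   Context: $K$ is a field; $K[\mathbf T_\lambda]$ is the polynomial ring over $K$ in variables $T_{ij}$, $(i,j)\in\mathbf T_\lambda$. A 2-minor of $\mathbf T_\lambda$ is $T_{ij}T_{kl}-T_{il}T_{kj}$ with $i<k$, $j<l$ and $(i,j),(i,l),(k,j),(k,l)\in\mathbf T_\lambda$. *)

theory Defs
  imports Main "HOL-Library.Poly_Mapping"
begin

text \<open>Multivariate polynomials over a field in variables indexed by pairs (i,j):
  monomials are finitely supported exponent vectors, polynomials are finitely
  supported coefficient functions on monomials (multiplication = convolution).\<close>

type_synonym monom = "(nat \<times> nat) \<Rightarrow>\<^sub>0 nat"
type_synonym 'k mpoly = "monom \<Rightarrow>\<^sub>0 'k"

definition Var :: "nat \<times> nat \<Rightarrow> 'k::field mpoly" where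
  "Var v = Poly_Mapping.single (Poly_Mapping.single v 1) 1"

definition monomial_poly :: "monom \<Rightarrow> 'k::field mpoly" where
  "monomial_poly m = Poly_Mapping.single m 1"

text \<open>The shape T_lambda; lam ! (i-1) is lambda_i.\<close>
definition tableau :: "nat list \<Rightarrow> (nat \<times> nat) set" where
  "tableau lam = {(i,j). 1 \<le> i \<and> i \<le> length lam \<and> 1 \<le> j \<and> j \<le> lam ! (i - 1)}"

definition poly_ring :: "(nat \<times> nat) set \<Rightarrow> 'k::field mpoly set" where
  "poly_ring V = {q :: 'k mpoly. \<forall>u \<in> Poly_Mapping.keys q. Poly_Mapping.keys u \<subseteq> V}"

definition ideal_gen :: "(nat \<times> nat) set \<Rightarrow> 'k::field mpoly set \<Rightarrow> 'k mpoly set" where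
  "ideal_gen V S = {f. \<exists>cs gs. length cs = length gs \<and> set gs \<subseteq> S \<and> set cs \<subseteq> poly_ring V
                          \<and> f = sum_list (map2 (*) cs gs)}"

definition two_minors :: "nat list \<Rightarrow> 'k::field mpoly set" where
  "two_minors lam = {Var (i,j) * Var (k,l) - Var (i,l) * Var (k,j) | i j k l.
      i < k \<and> j < l \<and> (i,j) \<in> tableau lam \<and> (i,l) \<in> tableau lam
      \<and> (k,j) \<in> tableau lam \<and> (k,l) \<in> tableau lam}"

definition diag_sums :: "nat list \<Rightarrow> 'k::field mpoly set" where
  "diag_sums lam =
     {(\<Sum>i \<in> {i. 1 \<le> i \<and> (i, k + i) \<in> tableau lam}. Var (i, k + i)) | k. k < hd lam}
   \<union> {(\<Sum>i \<in> {i. 1 \<le> i \<and> (k + i, i) \<in> tableau lam}. Var (k + i, i)) | k. 1 \<le> k \<and> k < length lam}"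

text \<open>Variable order: T_{1,1} > T_{1,2} > ... > T_{n,lambda_n}, i.e. (i,j) is a larger
  variable than (k,l) iff (i,j) is lexicographically smaller.\<close>
definition var_gt :: "nat \<times> nat \<Rightarrow> nat \<times> nat \<Rightarrow> bool" where
  "var_gt v w = (fst v < fst w \<or> (fst v = fst w \<and> snd v < snd w))"

definition mdeg :: "monom \<Rightarrow> nat" where
  "mdeg m = sum (Poly_Mapping.lookup m) (Poly_Mapping.keys m)"

definition revlex_gt :: "monom \<Rightarrow> monom \<Rightarrow> bool" where
  "revlex_gt u v = (mdeg u > mdeg v \<or>
     (mdeg u = mdeg v \<and> (\<exists>x. Poly_Mapping.lookup u x < Poly_Mapping.lookup v x \<and>
        (\<forall>y. var_gt x y \<longrightarrow> Poly_Mapping.lookup u y = Poly_Mapping.lookup v y))))"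

definition lead_monom :: "'k::field mpoly \<Rightarrow> monom" where
  "lead_monom p = (THE m. m \<in> Poly_Mapping.keys p \<and> (\<forall>m' \<in> Poly_Mapping.keys p. m' \<noteq> m \<longrightarrow> revlex_gt m m'))"

definition initial_ideal :: "(nat \<times> nat) set \<Rightarrow> 'k::field mpoly set \<Rightarrow> 'k mpoly set" where
  "initial_ideal V J = ideal_gen V {monomial_poly (lead_monom f) | f. f \<in> J \<and> f \<noteq> 0}"

end

theory Submission
  imports Defs "HOL-Library.Product_Lexorder"
begin

lemma poly_ring_mult:
  assumes "p \<in> poly_ring V" "q \<in> poly_ring V"
  shows "p * q \<in> poly_ring V"
proof -
  { fix u assume "u \<in> Poly_Mapping.keys (p*q)"
    then obtain a b where "u = a + b" "a \<in> Poly_Mapping.keys p" "b \<in> Poly_Mapping.keys q"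
      using keys_mult by blast
    then have "Poly_Mapping.keys u \<subseteq> V" using assms keys_add[of a b] unfolding poly_ring_def by blast }
  then show ?thesis unfolding poly_ring_def by blast
qed

lemma poly_ring_uminus: "p \<in> poly_ring V \<Longrightarrow> - p \<in> poly_ring V"
  by (simp add: poly_ring_def)

lemma poly_ring_one: "(1::'k::field mpoly) \<in> poly_ring V"
  by (simp add: poly_ring_def)

lemma Var_poly_ring: "v \<in> V \<Longrightarrow> (Var v :: 'k::field mpoly) \<in> poly_ring V"
  by (simp add: poly_ring_def Var_def)

lemma poly_ring_pow: "p \<in> poly_ring V \<Longrightarrow> (p::'k::field mpoly) ^ k \<in> poly_ring V"
  by (induction k) (auto simp: poly_ring_one poly_ring_mult)

lemma sum_map2_mult:
  "length cs = length gs \<Longrightarrow>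
   sum_list (map2 (*) (map ((*) q) cs) gs) = (q::'a::comm_ring_1) * sum_list (map2 (*) cs gs)"
  by (induction cs gs rule: list_induct2) (simp_all add: algebra_simps)

lemma ideal_gen_mult:
  assumes "q \<in> poly_ring V" "f \<in> ideal_gen V S"
  shows "q * f \<in> ideal_gen V S"
proof -
  from assms(2) obtain cs gs where h: "length cs = length gs" "set gs \<subseteq> S" "set cs \<subseteq> poly_ring V"
      "f = sum_list (map2 (*) cs gs)"
    unfolding ideal_gen_def by blast
  have "set (map ((*) q) cs) \<subseteq> poly_ring V" using h(3) assms(1) poly_ring_mult by auto
  then show ?thesis unfolding ideal_gen_def
    using h sum_map2_mult[OF h(1), of q] by (intro CollectI exI[of _ "map ((*) q) cs"] exI[of _ gs]) auto
qed

lemma ideal_gen_add: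
  assumes "f \<in> ideal_gen V S" "g \<in> ideal_gen V S"
  shows "f + g \<in> ideal_gen V S"
proof -
  from assms(1) obtain cs gs where h: "length cs = length gs" "set gs \<subseteq> S" "set cs \<subseteq> poly_ring V"
      "f = sum_list (map2 (*) cs gs)"
    unfolding ideal_gen_def by blast
  from assms(2) obtain cs' gs' where h': "length cs' = length gs'" "set gs' \<subseteq> S" "set cs' \<subseteq> poly_ring V"
      "g = sum_list (map2 (*) cs' gs')"
    unfolding ideal_gen_def by blast
  show ?thesis unfolding ideal_gen_def
    using h h' by (intro CollectI exI[of _ "cs @ cs'"] exI[of _ "gs @ gs'"]) auto
qed

lemma ideal_gen_gen:
  assumes "g \<in> S" shows "(g::'k::field mpoly) \<in> ideal_gen V S"
  unfolding ideal_gen_def using assms poly_ring_one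
  by (intro CollectI exI[of _ "[1]"] exI[of _ "[g]"]) auto

lemma ideal_gen_zero: "0 \<in> ideal_gen V S"
  unfolding ideal_gen_def by (intro CollectI exI[of _ "[]"]) auto

lemma ideal_gen_uminus:
  assumes "(f::'k::field mpoly) \<in> ideal_gen V S" shows "- f \<in> ideal_gen V S"
proof -
  have "(-1) * f \<in> ideal_gen V S"
    by (rule ideal_gen_mult[OF poly_ring_uminus[OF poly_ring_one] assms])
  then show ?thesis by simp
qed

lemma ideal_gen_diff:
  "(f::'k::field mpoly) \<in> ideal_gen V S \<Longrightarrow> g \<in> ideal_gen V S \<Longrightarrow> f - g \<in> ideal_gen V S"
  using ideal_gen_add[of f V S "- g"] ideal_gen_uminus[of g V S] by simp

section \<open>Degrees and the set N\<close>

lemma keys_add_monom: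
  "Poly_Mapping.keys ((a::monom) + b) = Poly_Mapping.keys a \<union> Poly_Mapping.keys b"
  by (auto simp: in_keys_iff lookup_add)

lemma mdeg_superset:
  "finite A \<Longrightarrow> Poly_Mapping.keys m \<subseteq> A \<Longrightarrow> mdeg m = sum (Poly_Mapping.lookup m) A"
  unfolding mdeg_def by (rule sum.mono_neutral_left) (auto simp: in_keys_iff)

lemma mdeg_add: "mdeg ((a::monom) + b) = mdeg a + mdeg b"
proof -
  let ?A = "Poly_Mapping.keys a \<union> Poly_Mapping.keys b"
  have "mdeg (a + b) = sum (Poly_Mapping.lookup (a+b)) ?A"
    by (rule mdeg_superset) (auto simp: keys_add_monom)
  also have "\<dots> = sum (Poly_Mapping.lookup a) ?A + sum (Poly_Mapping.lookup b) ?A"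
    by (simp add: lookup_add sum.distrib)
  also have "\<dots> = mdeg a + mdeg b"
    using mdeg_superset[of ?A a] mdeg_superset[of ?A b] by auto
  finally show ?thesis .
qed

lemma mdeg_single: "mdeg (Poly_Mapping.single v k) = k"
  by (simp add: mdeg_def)

definition Nd :: "nat \<times> nat \<Rightarrow> nat \<Rightarrow> 'k::field mpoly set" where
  "Nd v0 d = {r. \<forall>u \<in> Poly_Mapping.keys r. mdeg u = d \<and> (\<exists>v \<in> Poly_Mapping.keys u. v0 < v)}"

lemma Nd_zero: "0 \<in> Nd v0 d" by (simp add: Nd_def)

lemma Nd_add: "r \<in> Nd v0 d \<Longrightarrow> s \<in> Nd v0 d \<Longrightarrow> r + s \<in> Nd v0 d"
  using keys_add[of r s] unfolding Nd_def by blast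

lemma Nd_uminus: "r \<in> Nd v0 d \<Longrightarrow> - r \<in> Nd v0 d" by (simp add: Nd_def)

lemma Nd_Var:
  assumes r: "r \<in> Nd v0 d" shows "Var w * r \<in> Nd v0 (Suc d)"
proof -
  { fix u assume "u \<in> Poly_Mapping.keys (Var w * r)"
    then obtain a b where u: "u = a+b" "a \<in> Poly_Mapping.keys (Var w :: 'a mpoly)" "b \<in> Poly_Mapping.keys r"
      using keys_mult by blast
    then have a: "a = Poly_Mapping.single w 1" by (simp add: Var_def)
    from r u(3) obtain v where "mdeg b = d" "v \<in> Poly_Mapping.keys b" "v0 < v" unfolding Nd_def by blast
    then have "mdeg u = Suc d \<and> (\<exists>v \<in> Poly_Mapping.keys u. v0 < v)"
      using u a by (auto simp: mdeg_add mdeg_single keys_add_monom) }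
  then show ?thesis unfolding Nd_def by blast
qed

lemma Nd_pow: "r \<in> Nd v0 d \<Longrightarrow> Var w ^ k * r \<in> Nd v0 (d + k)"
proof (induction k)
  case 0 then show ?case by simp
next
  case (Suc k)
  then have "Var w * (Var w ^ k * r) \<in> Nd v0 (Suc (d + k))" by (intro Nd_Var) auto
  then show ?case by (simp add: mult.assoc)
qed

lemma Nd_Var_small: "v0 < p \<Longrightarrow> (Var p :: 'k::field mpoly) \<in> Nd v0 1"
  by (simp add: Nd_def Var_def mdeg_single)

section \<open>Congruence modulo ideal plus small monomials\<close>

definition cg :: "(nat\<times>nat) set \<Rightarrow> 'k::field mpoly set \<Rightarrow> nat\<times>nat \<Rightarrow> nat \<Rightarrow> 'k mpoly \<Rightarrow> 'k mpoly \<Rightarrow> bool" where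
  "cg V S v0 d p q \<longleftrightarrow> (\<exists>g \<in> ideal_gen V S. \<exists>r \<in> Nd v0 d. p - q = g + r)"

lemma cg_J: "p - q \<in> ideal_gen V S \<Longrightarrow> cg V S v0 d p q"
  unfolding cg_def by (intro bexI[of _ "p - q"] bexI[of _ 0]) (simp_all add: Nd_zero)

lemma cg_N: "p - q \<in> Nd v0 d \<Longrightarrow> cg V S v0 d p q"
  unfolding cg_def by (intro bexI[of _ 0] bexI[of _ "p - q"]) (simp_all add: ideal_gen_zero)

lemma cg_refl: "cg V S v0 d p p"
  by (rule cg_J) (simp add: ideal_gen_zero)

lemma cg_trans:
  assumes "cg V S v0 d p q" "cg V S v0 d q s" shows "cg V S v0 d p s"
proof -
  from assms obtain g1 r1 g2 r2 where h: "g1 \<in> ideal_gen V S" "r1 \<in> Nd v0 d" "p - q = g1 + r1"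
    "g2 \<in> ideal_gen V S" "r2 \<in> Nd v0 d" "q - s = g2 + r2" unfolding cg_def by blast
  have "p - s = (g1 + g2) + (r1 + r2)" using h(3,6) by (simp add: algebra_simps)
  then show ?thesis unfolding cg_def using h ideal_gen_add Nd_add by blast
qed

lemma cg_diff:
  assumes "cg V S v0 d p1 q1" "cg V S v0 d p2 q2" shows "cg V S v0 d (p1 - p2) (q1 - q2)"
proof -
  from assms obtain g1 r1 g2 r2 where h: "g1 \<in> ideal_gen V S" "r1 \<in> Nd v0 d" "p1 - q1 = g1 + r1"
    "g2 \<in> ideal_gen V S" "r2 \<in> Nd v0 d" "p2 - q2 = g2 + r2" unfolding cg_def by blast
  have "(p1 - p2) - (q1 - q2) = (g1 - g2) + (r1 + - r2)" using h(3,6) by (simp add: algebra_simps)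
  then show ?thesis unfolding cg_def using h ideal_gen_diff Nd_add Nd_uminus by blast
qed

lemma cg_add:
  assumes "cg V S v0 d p1 q1" "cg V S v0 d p2 q2" shows "cg V S v0 d (p1 + p2) (q1 + q2)"
proof -
  from assms obtain g1 r1 g2 r2 where h: "g1 \<in> ideal_gen V S" "r1 \<in> Nd v0 d" "p1 - q1 = g1 + r1"
    "g2 \<in> ideal_gen V S" "r2 \<in> Nd v0 d" "p2 - q2 = g2 + r2" unfolding cg_def by blast
  have "(p1 + p2) - (q1 + q2) = (g1 + g2) + (r1 + r2)" using h(3,6) by (simp add: algebra_simps)
  then show ?thesis unfolding cg_def using h ideal_gen_add Nd_add by blast
qed

lemma cg_Var:
  assumes "w \<in> V" "cg V S v0 d p q" shows "cg V S v0 (Suc d) (Var w * p) (Var w * q)"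
proof -
  from assms obtain g r where h: "g \<in> ideal_gen V S" "r \<in> Nd v0 d" "p - q = g + r"
    unfolding cg_def by blast
  have "Var w * p - Var w * q = Var w * g + Var w * r" using h(3)
    by (metis distrib_left right_diff_distrib)
  then show ?thesis unfolding cg_def
    using ideal_gen_mult[OF Var_poly_ring[OF assms(1)] h(1)] Nd_Var[OF h(2)] by blast
qed

lemma cg_pow:
  assumes "w \<in> V" "cg V S v0 d p q" "d' = d + k"
  shows "cg V S v0 d' (Var w ^ k * p) (Var w ^ k * q)"
  using assms(3)
proof (induction k arbitrary: d')
  case 0 then show ?case using assms(2) by simp
next
  case (Suc k)
  have "cg V S v0 (Suc (d + k)) (Var w * (Var w ^ k * p)) (Var w * (Var w ^ k * q))"
    by (rule cg_Var[OF assms(1)]) (rule Suc.IH, simp)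
  then show ?case using Suc.prems by (simp add: mult.assoc)
qed

lemma cg_sum0:
  assumes "finite A" "\<forall>a\<in>A. cg V S v0 d (f a) 0"
  shows "cg V S v0 d (sum f A) 0"
  using assms
proof (induction A rule: finite_induct)
  case empty then show ?case by (simp add: cg_refl)
next
  case (insert x F)
  then have "cg V S v0 d (f x + sum f F) (0 + 0)" by (intro cg_add) auto
  then show ?case using insert by simp
qed

section \<open>The revlex order\<close>

lemma var_gt_less: "var_gt v w \<longleftrightarrow> v < w"
  by (simp add: var_gt_def less_prod_def')

lemma revlex_asym: "revlex_gt u v \<Longrightarrow> revlex_gt v u \<Longrightarrow> False"
proof -
  assume a: "revlex_gt u v" and b: "revlex_gt v u"
  from a b have "mdeg u = mdeg v" unfolding revlex_gt_def by auto
  with a b obtain x1 x2 where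
    1: "Poly_Mapping.lookup u x1 < Poly_Mapping.lookup v x1"
       "\<forall>y. x1 < y \<longrightarrow> Poly_Mapping.lookup u y = Poly_Mapping.lookup v y" and
    2: "Poly_Mapping.lookup v x2 < Poly_Mapping.lookup u x2"
       "\<forall>y. x2 < y \<longrightarrow> Poly_Mapping.lookup v y = Poly_Mapping.lookup u y"
    unfolding revlex_gt_def var_gt_less by auto
  show False
  proof (cases x1 x2 rule: linorder_cases)
    case less then show ?thesis using 1(2)[rule_format, of x2] 2(1) by simp
  next
    case equal then show ?thesis using 1 2 by simp
  next
    case greater then show ?thesis using 2(2)[rule_format, of x1] 1(1) by simp
  qed
qed

lemma revlex_small:
  assumes "mdeg m = k" "v \<in> Poly_Mapping.keys m" "v0 < v"
  shows "revlex_gt (Poly_Mapping.single v0 k) m"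
proof -
  let ?z = "Max (Poly_Mapping.keys m)"
  have fin: "finite (Poly_Mapping.keys m)" by simp
  have ne: "Poly_Mapping.keys m \<noteq> {}" using assms(2) by blast
  have "v \<le> ?z" using Max_ge[OF fin assms(2)] .
  then have z: "v0 < ?z" using assms(3) by (rule_tac less_le_trans) auto
  have zk: "?z \<in> Poly_Mapping.keys m" using Max_in[OF fin ne] .
  have 1: "Poly_Mapping.lookup (Poly_Mapping.single v0 k) ?z < Poly_Mapping.lookup m ?z"
    using z zk by (simp add: lookup_single_not_eq in_keys_iff)
  have 2: "\<forall>y. var_gt ?z y \<longrightarrow> Poly_Mapping.lookup (Poly_Mapping.single v0 k) y = Poly_Mapping.lookup m y"
  proof (intro allI impI)
    fix y assume "var_gt ?z y"
    then have y: "?z < y" by (simp add: var_gt_less)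
    then have "y \<notin> Poly_Mapping.keys m" using Max_ge[OF fin] by (meson leD)
    moreover have "v0 \<noteq> y" using y z by auto
    ultimately show "Poly_Mapping.lookup (Poly_Mapping.single v0 k) y = Poly_Mapping.lookup m y"
      by (simp add: lookup_single_not_eq in_keys_iff)
  qed
  have "mdeg (Poly_Mapping.single v0 k) = mdeg m" using assms(1) by (simp add: mdeg_single)
  then show ?thesis unfolding revlex_gt_def using 1 2 by blast
qed

lemma Var_power: "(Var v :: 'k::field mpoly) ^ k = Poly_Mapping.single (Poly_Mapping.single v k) 1"
proof (induction k)
  case 0 then show ?case by simp
next
  case (Suc k)
  then show ?case by (simp add: Var_def mult_single single_add[symmetric])
qed

locale tab_ctx =
  fixes lam :: "nat list" and i j :: nat
  assumes srt: "sorted_wrt (\<ge>) lam" and ij: "(i,j) \<in> tableau lam"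
begin

lemma ij_bounds: "1 \<le> i" "i \<le> length lam" "1 \<le> j" "j \<le> lam ! (i - 1)"
  using ij by (auto simp: tableau_def)

lemma lam_mono: "a \<le> a' \<Longrightarrow> a' < length lam \<Longrightarrow> lam ! a' \<le> lam ! a"
  using srt sorted_wrt_nth_less[OF srt] by (cases "a = a'") force+

lemma tab_mono:
  assumes "1 \<le> a" "a \<le> i" "1 \<le> b" "b \<le> j" shows "(a,b) \<in> tableau lam"
proof -
  have "lam ! (i - 1) \<le> lam ! (a - 1)" using lam_mono[of "a-1" "i-1"] assms ij_bounds by auto
  then show ?thesis using assms ij_bounds by (auto simp: tableau_def)
qed

lemma minor_cg:
  assumes "1 \<le> a" "a < i" "1 \<le> b" "b \<le> j" "1 \<le> c" "c \<le> j"
  shows "cg (tableau lam) (two_minors lam \<union> diag_sums lam) (i,j) d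
     ((Var (i,c) :: 'k::field mpoly) * Var (a,b)) (Var (a,c) * Var (i,b))"
proof -
  have t: "(a,b) \<in> tableau lam" "(a,c) \<in> tableau lam" "(i,b) \<in> tableau lam" "(i,c) \<in> tableau lam"
    using tab_mono assms ij_bounds by auto
  consider "b < c" | "c < b" | "b = c" by linarith
  then show ?thesis
  proof cases
    case 1
    have "(Var (a,b) * Var (i,c) - Var (a,c) * Var (i,b) :: 'k mpoly) \<in> two_minors lam"
      unfolding two_minors_def using t 1 assms(2) by blast
    then show ?thesis
      by (intro cg_J) (auto intro: ideal_gen_gen simp: mult.commute)
  next
    case 2
    have "(Var (a,c) * Var (i,b) - Var (a,b) * Var (i,c) :: 'k mpoly) \<in> two_minors lam"
      unfolding two_minors_def using t 2 assms(2) by blast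
    then have "- (Var (a,c) * Var (i,b) - Var (a,b) * Var (i,c) :: 'k mpoly)
       \<in> ideal_gen (tableau lam) (two_minors lam \<union> diag_sums lam)"
      by (intro ideal_gen_uminus ideal_gen_gen) auto
    then show ?thesis
      by (intro cg_J) (simp add: mult.commute)
  next
    case 3 then show ?thesis by (simp add: cg_refl mult.commute)
  qed
qed

lemma diag_exists:
  assumes "(i, b) \<in> tableau lam"
  shows "\<exists>P. finite P \<and> (i,b) \<in> P \<and> (\<Sum>p\<in>P. Var p :: 'k::field mpoly) \<in> diag_sums lam \<and>
      (\<forall>p \<in> P - {(i,b)}. (\<exists>s. 1 \<le> s \<and> s < i \<and> s < b \<and> p = (i-s, b-s)) \<or> i < fst p)"
proof -
  have b: "1 \<le> b" "b \<le> lam ! (i-1)" using assms by (auto simp: tableau_def)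
  have l0: "lam ! (i-1) \<le> lam ! 0" using lam_mono[of 0 "i-1"] ij_bounds by auto
  have hd: "hd lam = lam ! 0" using ij_bounds by (cases lam) auto
  show ?thesis
  proof (cases "i \<le> b")
    case True
    define k where "k = b - i"
    define Q where "Q = {t. 1 \<le> t \<and> (t, k + t) \<in> tableau lam}"
    define f where "f = (\<lambda>t::nat. (t, k + t))"
    have finQ: "finite Q" unfolding Q_def tableau_def
      by (rule finite_subset[of _ "{..length lam}"]) auto
    have injf: "inj_on f Q" unfolding f_def inj_on_def by auto
    have kl: "k < hd lam" using b l0 hd ij_bounds True unfolding k_def by linarith
    have "(\<Sum>p\<in>f ` Q. Var p :: 'k mpoly) = (\<Sum>t\<in>Q. Var (t, k + t))"
      using sum.reindex[OF injf, of Var] by (simp add: f_def)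
    also have "\<dots> \<in> diag_sums lam" unfolding diag_sums_def Q_def using kl by blast
    finally have D: "(\<Sum>p\<in>f ` Q. Var p :: 'k mpoly) \<in> diag_sums lam" .
    have iQ: "(i,b) \<in> f ` Q" unfolding f_def Q_def k_def using assms True ij_bounds
      by (intro image_eqI[of _ _ i]) auto
    have rest: "\<forall>p \<in> f ` Q - {(i,b)}. (\<exists>s. 1 \<le> s \<and> s < i \<and> s < b \<and> p = (i-s, b-s)) \<or> i < fst p"
    proof
      fix p assume "p \<in> f ` Q - {(i,b)}"
      then obtain t where t: "t \<in> Q" "p = (t, k+t)" "p \<noteq> (i,b)" unfolding f_def by auto
      have t1: "1 \<le> t" using t(1) unfolding Q_def by auto
      show "(\<exists>s. 1 \<le> s \<and> s < i \<and> s < b \<and> p = (i-s, b-s)) \<or> i < fst p"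
      proof (cases "t < i")
        case True
        then show ?thesis using t t1 \<open>i \<le> b\<close> unfolding k_def
          by (intro disjI1 exI[of _ "i - t"]) auto
      next
        case False
        then have "t \<noteq> i" using t \<open>i \<le> b\<close> unfolding k_def by auto
        then show ?thesis using False t by auto
      qed
    qed
    show ?thesis using finQ D iQ rest by blast
  next
    case False
    define k where "k = i - b"
    define Q where "Q = {t. 1 \<le> t \<and> (k + t, t) \<in> tableau lam}"
    define f where "f = (\<lambda>t::nat. (k + t, t))"
    have finQ: "finite Q" unfolding Q_def tableau_def
      by (rule finite_subset[of _ "{..length lam}"]) auto
    have injf: "inj_on f Q" unfolding f_def inj_on_def by auto
    have kl: "1 \<le> k" "k < length lam" using b ij_bounds False unfolding k_def by linarith+
    have "(\<Sum>p\<in>f ` Q. Var p :: 'k mpoly) = (\<Sum>t\<in>Q. Var (k + t, t))"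
      using sum.reindex[OF injf, of Var] by (simp add: f_def)
    also have "\<dots> \<in> diag_sums lam" unfolding diag_sums_def Q_def using kl by blast
    finally have D: "(\<Sum>p\<in>f ` Q. Var p :: 'k mpoly) \<in> diag_sums lam" .
    have iQ: "(i,b) \<in> f ` Q" unfolding f_def Q_def k_def using assms False b
      by (intro image_eqI[of _ _ b]) auto
    have rest: "\<forall>p \<in> f ` Q - {(i,b)}. (\<exists>s. 1 \<le> s \<and> s < i \<and> s < b \<and> p = (i-s, b-s)) \<or> i < fst p"
    proof
      fix p assume "p \<in> f ` Q - {(i,b)}"
      then obtain t where t: "t \<in> Q" "p = (k+t, t)" "p \<noteq> (i,b)" unfolding f_def by auto
      have t1: "1 \<le> t" using t(1) unfolding Q_def by auto
      show "(\<exists>s. 1 \<le> s \<and> s < i \<and> s < b \<and> p = (i-s, b-s)) \<or> i < fst p"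
      proof (cases "t < b")
        case True
        then show ?thesis using t t1 False unfolding k_def
          by (intro disjI1 exI[of _ "b - t"]) auto
      next
        case F2: False
        then have "t \<noteq> b" using t False unfolding k_def by auto
        then show ?thesis using F2 t False unfolding k_def by auto
      qed
    qed
    show ?thesis using finQ D iQ rest by blast
  qed
qed

lemma key:
  assumes c: "1 \<le> c" "c \<le> j"
  shows "1 \<le> b \<Longrightarrow> b \<le> c \<Longrightarrow> cg (tableau lam) (two_minors lam \<union> diag_sums lam) (i,j) b
            ((Var (i,c) :: 'k::field mpoly) ^ (b - 1) * Var (i,b)) 0"
proof (induction b rule: less_induct)
  case (less b)
  let ?V = "tableau lam" and ?G = "two_minors lam \<union> diag_sums lam :: 'k mpoly set"
  let ?x = "Var (i,c) :: 'k mpoly"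
  have ib: "(i,b) \<in> tableau lam" using tab_mono less.prems c ij_bounds by auto
  have xc: "(i,c) \<in> tableau lam" using tab_mono c ij_bounds by auto
  obtain P where P: "finite P" "(i,b) \<in> P" "(\<Sum>p\<in>P. Var p :: 'k mpoly) \<in> diag_sums lam"
     "\<forall>p \<in> P - {(i,b)}. (\<exists>s. 1 \<le> s \<and> s < i \<and> s < b \<and> p = (i-s, b-s)) \<or> i < fst p"
    using diag_exists[OF ib] by blast
  have D: "cg ?V ?G (i,j) b (?x^(b-1) * (\<Sum>p\<in>P. Var p)) 0"
    apply (rule cg_J)
    using ideal_gen_mult[OF poly_ring_pow[OF Var_poly_ring[OF xc]] ideal_gen_gen[of "\<Sum>p\<in>P. Var p" ?G]] P(3)
    by auto
  have each: "\<forall>p \<in> P - {(i,b)}. cg ?V ?G (i,j) b (?x^(b-1) * Var p) 0"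
  proof
    fix p assume p: "p \<in> P - {(i,b)}"
    from P(4) p consider (up) s where "1 \<le> s" "s < i" "s < b" "p = (i-s,b-s)" | (down) "i < fst p"
      by blast
    then show "cg ?V ?G (i,j) b (?x^(b-1) * Var p) 0"
    proof cases
      case up
      define a where "a = i - s"
      define b' where "b' = b - s"
      have a1: "1 \<le> a" "a < i" "1 \<le> b'" "b' \<le> j" "b' < b" "b' \<le> c"
        using up less.prems c unfolding a_def b'_def by auto
      have ac: "(a,c) \<in> tableau lam" using tab_mono a1 c by auto
      have m: "cg ?V ?G (i,j) 2 (?x * Var (a,b')) (Var (a,c) * Var (i,b'))"
        by (rule minor_cg) (use a1 c in auto)
      have m2: "cg ?V ?G (i,j) b (?x^(b-2) * (?x * Var (a,b'))) (?x^(b-2) * (Var (a,c) * Var (i,b')))"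
        by (rule cg_pow[OF xc m]) (use up in auto)
      have ih: "cg ?V ?G (i,j) b' (?x^(b'-1) * Var (i,b')) 0"
        using less.IH[of b'] a1 by auto
      have ih2: "cg ?V ?G (i,j) (b-1) (?x^(s-1) * (?x^(b'-1) * Var (i,b'))) (?x^(s-1) * 0)"
        by (rule cg_pow[OF xc ih]) (use up a1 b'_def in auto)
      have ih3: "cg ?V ?G (i,j) (Suc (b-1)) (Var (a,c) * (?x^(s-1) * (?x^(b'-1) * Var (i,b'))))
                     (Var (a,c) * (?x^(s-1) * 0))"
        by (rule cg_Var[OF ac ih2])
      have sb: "Suc (b-1) = b" using up by auto
      have eq1: "?x^(b-1) * Var p = ?x^(b-2) * (?x * Var (a,b'))"
      proof -
        have "b - 1 = Suc (b - 2)" using up by auto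
        then show ?thesis using up unfolding a_def b'_def by (simp add: mult.assoc)
      qed
      have eq2: "?x^(b-2) * (Var (a,c) * Var (i,b')) = Var (a,c) * (?x^(s-1) * (?x^(b'-1) * Var (i,b')))"
      proof -
        have "b - 2 = (s - 1) + (b' - 1)" using up a1 unfolding b'_def by auto
        then show ?thesis by (simp add: power_add ac_simps)
      qed
      have m3: "cg ?V ?G (i,j) b (?x^(b-2) * (?x * Var (a,b'))) (Var (a,c) * (?x^(s-1) * (?x^(b'-1) * Var (i,b'))))"
        using m2 eq2 by simp
      show ?thesis using cg_trans[OF m3 ih3[unfolded sb]] eq1 by simp
    next
      case down
      have "(i,j) < p" using down by (cases p) auto
      then have "?x^(b-1) * Var p \<in> Nd (i,j) (1 + (b-1))" by (intro Nd_pow Nd_Var_small)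
      moreover have "1 + (b - 1) = b" using less.prems by auto
      ultimately show ?thesis by (intro cg_N) simp
    qed
  qed
  have sumeach: "cg ?V ?G (i,j) b (\<Sum>p\<in>P-{(i,b)}. ?x^(b-1) * Var p) 0"
    by (rule cg_sum0) (use P each in auto)
  have split: "?x^(b-1) * Var (i,b) = ?x^(b-1) * (\<Sum>p\<in>P. Var p) - (\<Sum>p\<in>P-{(i,b)}. ?x^(b-1) * Var p)"
  proof -
    have s: "(\<Sum>p\<in>P. Var p :: 'k mpoly) = Var (i,b) + (\<Sum>p\<in>P-{(i,b)}. Var p)"
      using sum.remove[OF P(1) P(2), of Var] .
    have "?x^(b-1) * (\<Sum>p\<in>P. Var p) = ?x^(b-1) * Var (i,b) + (\<Sum>p\<in>P-{(i,b)}. ?x^(b-1) * Var p)"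
      unfolding s distrib_left sum_distrib_left ..
    then show ?thesis by simp
  qed
  show ?case using cg_diff[OF D sumeach] split by simp
qed

end

theorem lemma5p3:
  fixes lam :: "nat list" and i j :: nat
  assumes "lam \<noteq> []"
    and "sorted_wrt (\<ge>) lam"
    and "\<forall>x \<in> set lam. 0 < x"
    and "(i, j) \<in> tableau lam"
  shows "(monomial_poly (Poly_Mapping.single (i, j) j) :: 'k::field mpoly)
           \<in> initial_ideal (tableau lam)
               (ideal_gen (tableau lam) (two_minors lam \<union> diag_sums lam))"
proof -
  have ctx: "tab_ctx lam i j" using assms by (simp add: tab_ctx_def)
  have j1: "1 \<le> j" "1 \<le> i" using assms(4) by (auto simp: tableau_def)
  let ?V = "tableau lam" and ?G = "two_minors lam \<union> diag_sums lam :: 'k mpoly set"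
  let ?m0 = "Poly_Mapping.single (i,j) j"
  let ?M = "monomial_poly ?m0 :: 'k mpoly"
  have c1: "cg ?V ?G (i,j) j (Var (i,j) ^ (j-1) * Var (i,j) :: 'k mpoly) 0"
    using tab_ctx.key[OF ctx, of j j] j1 by auto
  have "(Var (i,j) ^ (j-1) * Var (i,j) :: 'k mpoly) = Var (i,j) ^ j"
    using j1 by (metis Suc_diff_1 less_le_trans zero_less_one power_Suc2)
  also have "\<dots> = ?M" by (simp add: Var_power monomial_poly_def)
  finally obtain g r where g: "g \<in> ideal_gen ?V ?G" and r: "r \<in> Nd (i,j) j" and eq: "?M = g + r"
    using c1 unfolding cg_def by auto
  have km0: "Poly_Mapping.keys ?m0 = {(i,j)}" using j1 by simp
  have m0r: "?m0 \<notin> Poly_Mapping.keys r"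
  proof
    assume "?m0 \<in> Poly_Mapping.keys r"
    then obtain v where "v \<in> Poly_Mapping.keys ?m0" "(i,j) < v" using r unfolding Nd_def by blast
    then show False using km0 by auto
  qed
  have gdef: "g = ?M - r" using eq by simp
  have lk: "Poly_Mapping.lookup g ?m0 = 1"
    using m0r by (simp add: gdef lookup_minus monomial_poly_def in_keys_iff)
  have m0g: "?m0 \<in> Poly_Mapping.keys g" by (simp add: in_keys_iff lk)
  have kg: "Poly_Mapping.keys g \<subseteq> insert ?m0 (Poly_Mapping.keys r)"
    using keys_diff[of ?M r] by (simp add: gdef monomial_poly_def)
  have gt: "\<forall>m \<in> Poly_Mapping.keys r. revlex_gt ?m0 m"
  proof
    fix m assume "m \<in> Poly_Mapping.keys r"
    then obtain v where "mdeg m = j" "v \<in> Poly_Mapping.keys m" "(i,j) < v" using r unfolding Nd_def by blast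
    then show "revlex_gt ?m0 m" by (rule revlex_small)
  qed
  have lm: "lead_monom g = ?m0"
    unfolding lead_monom_def
  proof (rule the_equality)
    show "?m0 \<in> Poly_Mapping.keys g \<and> (\<forall>m'\<in>Poly_Mapping.keys g. m' \<noteq> ?m0 \<longrightarrow> revlex_gt ?m0 m')"
      using m0g kg gt by blast
  next
    fix m assume h: "m \<in> Poly_Mapping.keys g \<and> (\<forall>m'\<in>Poly_Mapping.keys g. m' \<noteq> m \<longrightarrow> revlex_gt m m')"
    show "m = ?m0"
    proof (rule ccontr)
      assume ne: "m \<noteq> ?m0"
      then have "revlex_gt m ?m0" using h m0g by auto
      moreover have "m \<in> Poly_Mapping.keys r" using h kg ne by auto
      then have "revlex_gt ?m0 m" using gt by blast
      ultimately show False using revlex_asym by blast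
    qed
  qed
  have gnz: "g \<noteq> 0" using m0g by auto
  have "?M \<in> {monomial_poly (lead_monom f) | f. f \<in> ideal_gen ?V ?G \<and> f \<noteq> 0}"
    using g lm gnz by force
  then show ?thesis unfolding initial_ideal_def by (rule ideal_gen_gen)
qed

end
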